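(* Let $T=(V,E,F)$ be a triangulated surface and $\phi:|T|\to\mathbb C$ a geodesic homeomorphism whose induced PL metric is uniformly nondegenerate with constant $\epsilon>0$. There is a constant $C=C(\epsilon)>0$, depending only on $\epsilon$, such that: whenever $0<r_1<r_2$ and $V_1,V_2$ are nonempty subsets of $V$ with $\phi(V_1)\subseteq D_{r_1}$, $\phi(V_2)\subseteq\mathbb C\setminus D_{r_2}$, and $\phi(R_i)\subseteq D_{r_2}$ for every $i\in V_1$, one has $$\mathrm{VEL}(V_1,V_2)\ge C\Big(1-\big(\tfrac{r_1}{r_2}\big)^2\Big).$$ In particular, if $r_2\ge2r_1$ then $\mathrm{VEL}(V_1,V_2)\ge \tfrac34 C$.
   Context: A geodesic homeomorphism $\phi:|T|\to\mathbb C$ maps each edge to the straight segment between the images of its endpoints and $|T|$ homeomorphically onto $\mathbb C$; uniformly nondegenerate with constant $\epsilon$ means all inner angles of the image triangles are $\ge\epsilon$. $R_i$ is the union of the triangles containing $i$; $D_r=\{|z|<r\}$. For disjoint nonempty $V_1,V_2\subseteq V$, $\Gamma(V_1,V_2)$ is the set of finite paths in the graph $(V,E)$ joining a vertex of $V_1$ to a vertex of $V_2$. A vertex metric $\eta:V\to[0,\infty)$ is $\Gamma(V_1,V_2)$-admissible if $\sum_{v\in\gamma}\eta(v)\ge1$ for every $\gamma\in\Gamma(V_1,V_2)$ (sum over the vertices of $\gamma$). $\mathrm{Mod}(V_1,V_2)=\inf\{\sum_{v\in V}\eta(v)^2:\eta\text{ admissible}\}$ and $\mathrm{VEL}(V_1,V_2)=1/\mathrm{Mod}(V_1,V_2)$.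 *)

theory Defs
  imports "HOL-Analysis.Analysis" "HOL-Library.Extended_Nonnegative_Real"
begin

text \<open>A triangulation T = (V,E,F) with vertices labelled by natural numbers
  (any triangulation of the plane has countably many vertices).\<close>

definition triangulation_data :: "nat set \<Rightarrow> nat set set \<Rightarrow> nat set set \<Rightarrow> bool" where
  "triangulation_data V E F \<longleftrightarrow>
     (\<forall>f\<in>F. f \<subseteq> V \<and> card f = 3) \<and>
     V = \<Union>F \<and>
     E = {e. card e = 2 \<and> (\<exists>f\<in>F. e \<subseteq> f)}"

text \<open>The geodesic map determined by vertex positions p: each face f is mapped
  affinely onto the triangle convex hull (p ` f).\<close>

definition geo_triangle :: "(nat \<Rightarrow> complex) \<Rightarrow> nat set \<Rightarrow> complex set" where
  "geo_triangle p f = convex hull (p ` f)"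

text \<open>The geodesic (piecewise affine) extension of p is a homeomorphism |T| \<rightarrow> \<complex>:
  nondegenerate image triangles, triangles meet exactly in the images of common
  faces, they cover the plane, and the triangulation is locally finite.\<close>

definition geodesic_homeomorphism ::
    "nat set \<Rightarrow> nat set set \<Rightarrow> nat set set \<Rightarrow> (nat \<Rightarrow> complex) \<Rightarrow> bool" where
  "geodesic_homeomorphism V E F p \<longleftrightarrow>
     triangulation_data V E F \<and>
     inj_on p V \<and>
     (\<forall>f\<in>F. \<not> collinear (p ` f)) \<and>
     (\<forall>f\<in>F. \<forall>g\<in>F. f \<noteq> g \<longrightarrow>
        geo_triangle p f \<inter> geo_triangle p g = geo_triangle p (f \<inter> g)) \<and>
     (\<Union>f\<in>F. geo_triangle p f) = UNIV \<and>
     (\<forall>z. \<exists>e>0. finite {f\<in>F. geo_triangle p f \<inter> ball z e \<noteq> {}})"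

definition inner_angle :: "complex \<Rightarrow> complex \<Rightarrow> complex \<Rightarrow> real" where
  "inner_angle a b c = arccos (((b - a) \<bullet> (c - a)) / (norm (b - a) * norm (c - a)))"

definition uniformly_nondegenerate ::
    "nat set set \<Rightarrow> (nat \<Rightarrow> complex) \<Rightarrow> real \<Rightarrow> bool" where
  "uniformly_nondegenerate F p \<epsilon> \<longleftrightarrow>
     (\<forall>f\<in>F. \<forall>a\<in>f. \<forall>b\<in>f. \<forall>c\<in>f. a \<noteq> b \<and> a \<noteq> c \<and> b \<noteq> c \<longrightarrow>
        inner_angle (p a) (p b) (p c) \<ge> \<epsilon>)"

text \<open>R_i: union of the (image) triangles containing vertex i, i.e. phi(R_i).\<close>

definition star_image :: "nat set set \<Rightarrow> (nat \<Rightarrow> complex) \<Rightarrow> nat \<Rightarrow> complex set" where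
  "star_image F p i = (\<Union>f\<in>{f\<in>F. i \<in> f}. geo_triangle p f)"

definition graph_paths :: "nat set set \<Rightarrow> nat set \<Rightarrow> nat set \<Rightarrow> nat list set" where
  "graph_paths E V1 V2 = {\<gamma>. \<gamma> \<noteq> [] \<and> hd \<gamma> \<in> V1 \<and> last \<gamma> \<in> V2 \<and>
      (\<forall>k. Suc k < length \<gamma> \<longrightarrow> {\<gamma> ! k, \<gamma> ! Suc k} \<in> E)}"

definition admissible ::
    "nat set \<Rightarrow> nat set set \<Rightarrow> nat set \<Rightarrow> nat set \<Rightarrow> (nat \<Rightarrow> real) \<Rightarrow> bool" where
  "admissible V E V1 V2 \<eta> \<longleftrightarrow>
     (\<forall>v\<in>V. \<eta> v \<ge> 0) \<and>
     (\<forall>\<gamma>\<in>graph_paths E V1 V2. (\<Sum>v\<in>set \<gamma>. \<eta> v) \<ge> 1)"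

definition vmod :: "nat set \<Rightarrow> nat set set \<Rightarrow> nat set \<Rightarrow> nat set \<Rightarrow> ennreal" where
  "vmod V E V1 V2 = (INF \<eta>\<in>{\<eta>. admissible V E V1 V2 \<eta>}.
       (\<Sum>\<^sub>\<infinity> v\<in>V. ennreal ((\<eta> v)\<^sup>2)))"

definition VEL :: "nat set \<Rightarrow> nat set set \<Rightarrow> nat set \<Rightarrow> nat set \<Rightarrow> ennreal" where
  "VEL V E V1 V2 = 1 / vmod V E V1 V2"

end

theory Submission
  imports Defs
begin


lemma chain_telescope:
  fixes h e :: "'a \<Rightarrow> real"
  assumes "\<And>x y. R x y \<Longrightarrow> h y - h x \<le> e x" "\<And>x. e x \<ge> 0"
  shows "successively R xs \<Longrightarrow> xs \<noteq> [] \<Longrightarrow> h (last xs) - h (hd xs) \<le> (\<Sum>v\<in>set xs. e v)"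
proof (induction "length xs" arbitrary: xs rule: less_induct)
  case less
  then obtain x ys where xs: "xs = x # ys" by (cases xs) auto
  show ?case
  proof (cases "ys = []")
    case True then show ?thesis using xs assms(2) by simp
  next
    case ne: False
    show ?thesis
    proof (cases "x \<in> set ys")
      case True
      then obtain as zs where ys: "ys = as @ x # zs" by (meson split_list)
      have s: "successively R (x # zs)"
        using less.prems(1) unfolding xs ys
        by (metis append_Cons successively_append_iff)
      have "h (last (x#zs)) - h (hd (x#zs)) \<le> (\<Sum>v\<in>set (x#zs). e v)"
        by (rule less.hyps) (use xs ys s in auto)
      moreover have "last (x#zs) = last xs" using xs ys by (cases zs) auto
      moreover have "(\<Sum>v\<in>set (x#zs). e v) \<le> (\<Sum>v\<in>set xs. e v)"
        by (rule sum_mono2) (use xs ys assms(2) in auto)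
      ultimately show ?thesis using xs by simp
    next
      case False
      have s: "successively R ys" using less.prems(1) xs
        by (auto simp add: successively_Cons)
      have "h (last ys) - h (hd ys) \<le> (\<Sum>v\<in>set ys. e v)"
        by (rule less.hyps) (use xs s ne in auto)
      moreover have "R x (hd ys)" using less.prems(1) xs ne
        by (cases ys) auto
      hence "h (hd ys) - h x \<le> e x" using assms(1) by blast
      moreover have "(\<Sum>v\<in>set xs. e v) = e x + (\<Sum>v\<in>set ys. e v)"
        using xs False by simp
      ultimately show ?thesis using xs ne by simp
    qed
  qed
qed




definition det2 :: "complex \<Rightarrow> complex \<Rightarrow> real" where
  "det2 u v = Re u * Im v - Im u * Re v"

lemma det2_inner_sq: "(det2 u v)\<^sup>2 + (u \<bullet> v)\<^sup>2 = (norm u)\<^sup>2 * (norm v)\<^sup>2"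
  unfolding det2_def inner_complex_def cmod_power2 by algebra

lemma abs_det2_le: "\<bar>det2 u v\<bar> \<le> norm u * norm v"
proof -
  have "(det2 u v)\<^sup>2 \<le> (norm u * norm v)\<^sup>2"
    using det2_inner_sq[of u v] by (simp add: power_mult_distrib) (smt (verit) zero_le_power2)
  hence "\<bar>det2 u v\<bar> \<le> \<bar>norm u * norm v\<bar>" by (simp only: abs_le_square_iff)
  thus ?thesis by simp
qed

lemma det2_diff_left: "det2 (a - b) c = det2 a c - det2 b c"
  and det2_diff_right: "det2 c (a - b) = det2 c a - det2 c b"
  and det2_add_left: "det2 (a + b) c = det2 a c + det2 b c"
  and det2_add_right: "det2 c (a + b) = det2 c a + det2 c b"
  by (simp_all add: det2_def algebra_simps)

lemma cramer:
  assumes "det2 u v \<noteq> 0"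
  shows "q = (det2 q v / det2 u v) *\<^sub>R u + (det2 u q / det2 u v) *\<^sub>R v"
proof -
  have "Re q * det2 u v = det2 q v * Re u + det2 u q * Re v"
       "Im q * det2 u v = det2 q v * Im u + det2 u q * Im v"
    unfolding det2_def by algebra+
  thus ?thesis using assms by (simp add: complex_eq_iff field_simps)
qed

lemma ball_in_triangle:
  fixes X Y Z :: complex
  defines "\<Delta> \<equiv> det2 (Y - X) (Z - X)"
  assumes D: "\<Delta> \<noteq> 0" and L: "L > 0" "norm (Y - X) \<le> L" "norm (Z - X) \<le> L" "norm (Z - Y) \<le> L"
  shows "ball ((X + Y + Z) / 3) (\<bar>\<Delta>\<bar> / (3 * L)) \<subseteq> convex hull {X, Y, Z}"
proof
  fix w assume "w \<in> ball ((X + Y + Z) / 3) (\<bar>\<Delta>\<bar> / (3 * L))"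
  define G where "G = (X + Y + Z) / 3"
  define d where "d = w - G"
  have nd: "norm d * L < \<bar>\<Delta>\<bar> / 3"
  proof -
    have "norm d < \<bar>\<Delta>\<bar> / (3 * L)"
      using \<open>w \<in> _\<close> by (simp add: d_def G_def dist_norm norm_minus_commute)
    thus ?thesis using L(1) by (simp add: pos_less_divide_eq algebra_simps)
  qed
  define a where "a = det2 (w - X) (Z - X) / \<Delta>"
  define b where "b = det2 (Y - X) (w - X) / \<Delta>"
  have wX: "w = (1 - a - b) *\<^sub>R X + a *\<^sub>R Y + b *\<^sub>R Z"
  proof -
    have "w - X = a *\<^sub>R (Y - X) + b *\<^sub>R (Z - X)"
      unfolding a_def b_def using cramer[OF D[unfolded \<Delta>_def], of "w - X"] \<Delta>_def by simp
    thus ?thesis by (simp add: algebra_simps)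
  qed
  have GX1: "det2 (G - X) (Z - X) = \<Delta> / 3"
    unfolding G_def \<Delta>_def det2_def by (simp add: field_simps)
  have GX2: "det2 (Y - X) (G - X) = \<Delta> / 3"
    unfolding G_def \<Delta>_def det2_def by (simp add: field_simps)
  have t1: "\<bar>det2 d (Z - X)\<bar> < \<bar>\<Delta>\<bar> / 3"
    using abs_det2_le[of d "Z - X"] nd L mult_left_mono[OF L(3), of "norm d"] by simp
  have t2: "\<bar>det2 (Y - X) d\<bar> < \<bar>\<Delta>\<bar> / 3"
    using abs_det2_le[of "Y - X" d] nd L mult_left_mono[OF L(2), of "norm d"] by (simp add: mult.commute)
  have t3: "\<bar>det2 d (Z - Y)\<bar> < \<bar>\<Delta>\<bar> / 3"
    using abs_det2_le[of d "Z - Y"] nd L mult_left_mono[OF L(4), of "norm d"] by simp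
  have wG: "w - X = (G - X) + d" by (simp add: d_def)
  have ea: "a = 1/3 + det2 d (Z - X) / \<Delta>"
    unfolding a_def wG det2_add_left GX1 using D by (simp add: field_simps)
  have eb: "b = 1/3 + det2 (Y - X) d / \<Delta>"
    unfolding b_def wG det2_add_right GX2 using D by (simp add: field_simps)
  have r1: "det2 (Y-X) d = - det2 d (Y-X)" by (simp add: det2_def)
  have r2: "det2 d (Z-Y) = det2 d (Z-X) - det2 d (Y-X)" by (simp add: det2_def algebra_simps)
  have ec: "1 - a - b = 1/3 - det2 d (Z - Y) / \<Delta>"
    unfolding ea eb r1 r2 by (simp add: diff_divide_distrib)
  have q: "\<bar>t / \<Delta>\<bar> < 1/3" if "\<bar>t\<bar> < \<bar>\<Delta>\<bar> / 3" for t
    using that D by (simp add: abs_divide divide_less_eq)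
  have "a \<ge> 0" "b \<ge> 0" "1 - a - b \<ge> 0"
    using q[OF t1] q[OF t2] q[OF t3] ea eb ec by linarith+
  then show "w \<in> convex hull {X, Y, Z}"
  proof -
    have "\<exists>u v w'. w = u *\<^sub>R X + v *\<^sub>R Y + w' *\<^sub>R Z \<and> 0 \<le> u \<and> 0 \<le> v \<and> 0 \<le> w' \<and> u + v + w' = 1"
      using wX \<open>a \<ge> 0\<close> \<open>b \<ge> 0\<close> \<open>1 - a - b \<ge> 0\<close> by (intro exI[of _ "1 - a - b"] exI[of _ a] exI[of _ b]) simp
    thus ?thesis unfolding convex_hull_3 by blast
  qed
qed

lemma norm_diff_sq_c: "(norm (u - v))\<^sup>2 = (norm u)\<^sup>2 + (norm v)\<^sup>2 - 2 * (u \<bullet> v)"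
  using dot_norm_neg[of u v] by simp

lemma det2_vertex_bound:
  assumes "0 \<le> u \<bullet> v" "u \<bullet> v \<le> k * norm u * norm v" "0 \<le> k" "k < 1"
  shows "sqrt (1 - k\<^sup>2) * norm u * norm v \<le> \<bar>det2 u v\<bar>"
proof -
  have "(u \<bullet> v)\<^sup>2 \<le> (k * norm u * norm v)\<^sup>2"
    using assms by (intro power_mono) auto
  hence "(1 - k\<^sup>2) * ((norm u)\<^sup>2 * (norm v)\<^sup>2) \<le> (det2 u v)\<^sup>2"
    using det2_inner_sq[of u v] by (simp add: power_mult_distrib algebra_simps)
  hence "sqrt ((1 - k\<^sup>2) * ((norm u)\<^sup>2 * (norm v)\<^sup>2)) \<le> sqrt ((det2 u v)\<^sup>2)"
    by (rule real_sqrt_le_mono)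
  thus ?thesis by (simp add: real_sqrt_mult mult.assoc)
qed

definition angle_ok :: "real \<Rightarrow> complex \<Rightarrow> complex \<Rightarrow> complex \<Rightarrow> bool" where
  "angle_ok k a b c \<longleftrightarrow> (b - a) \<bullet> (c - a) \<le> k * norm (b - a) * norm (c - a)"

lemma long_edge:
  assumes "norm (X - Y) \<le> norm (Z - Y)" "norm (X - Z) \<le> norm (Z - Y)"
    "angle_ok k Y Z X" "angle_ok k Z Y X" "0 \<le> k" "k < 1"
  shows "sqrt (1 - k\<^sup>2) / 2 * (norm (Z - Y))\<^sup>2 \<le> \<bar>det2 (Y - X) (Z - X)\<bar>"
proof -
  define s where "s = sqrt (1 - k\<^sup>2)"
  have s0: "s \<ge> 0" unfolding s_def using assms by (simp add: power_le_one)
  have e1: "\<bar>det2 (Z - Y) (X - Y)\<bar> = \<bar>det2 (Y - X) (Z - X)\<bar>" by (simp add: det2_def algebra_simps)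
  have e2: "\<bar>det2 (Y - Z) (X - Z)\<bar> = \<bar>det2 (Y - X) (Z - X)\<bar>" by (simp add: det2_def algebra_simps)
  have i1: "0 \<le> (Z - Y) \<bullet> (X - Y)"
  proof -
    have "(norm ((Z - Y) - (X - Y)))\<^sup>2 = (norm (Z - Y))\<^sup>2 + (norm (X - Y))\<^sup>2 - 2 * ((Z - Y) \<bullet> (X - Y))"
      by (rule norm_diff_sq_c)
    moreover have "(norm ((Z - Y) - (X - Y)))\<^sup>2 \<le> (norm (Z - Y))\<^sup>2"
      using assms(2) by (simp add: norm_minus_commute power_mono)
    ultimately show ?thesis by (smt (verit) zero_le_power2)
  qed
  have i2: "0 \<le> (Y - Z) \<bullet> (X - Z)"
  proof -
    have "(norm ((Y - Z) - (X - Z)))\<^sup>2 = (norm (Y - Z))\<^sup>2 + (norm (X - Z))\<^sup>2 - 2 * ((Y - Z) \<bullet> (X - Z))"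
      by (rule norm_diff_sq_c)
    moreover have "(norm ((Y - Z) - (X - Z)))\<^sup>2 \<le> (norm (Y - Z))\<^sup>2"
      using assms(1) by (simp add: norm_minus_commute power_mono)
    ultimately show ?thesis by (smt (verit) zero_le_power2)
  qed
  have b1: "s * norm (Z - Y) * norm (X - Y) \<le> \<bar>det2 (Y - X) (Z - X)\<bar>"
    using det2_vertex_bound[OF i1 _ assms(5,6)] assms(3) e1 unfolding angle_ok_def s_def by simp
  have b2: "s * norm (Y - Z) * norm (X - Z) \<le> \<bar>det2 (Y - X) (Z - X)\<bar>"
    using det2_vertex_bound[OF i2 _ assms(5,6)] assms(4) e2 unfolding angle_ok_def s_def by simp
  have tri: "norm (Z - Y) \<le> norm (X - Y) + norm (X - Z)"
    using norm_triangle_ineq4[of "X - Y" "X - Z"] by (simp add: norm_minus_commute)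
  have "s * norm (Z - Y) * norm (Z - Y) \<le> s * norm (Z - Y) * (norm (X - Y) + norm (X - Z))"
    using tri s0 by (intro mult_left_mono) auto
  also have "\<dots> \<le> 2 * \<bar>det2 (Y - X) (Z - X)\<bar>"
    using b1 b2 by (simp add: norm_minus_commute algebra_simps)
  finally show ?thesis unfolding s_def by (simp add: power2_eq_square)
qed

definition all_ok :: "real \<Rightarrow> complex \<Rightarrow> complex \<Rightarrow> complex \<Rightarrow> bool" where
  "all_ok k X Y Z \<longleftrightarrow> angle_ok k X Y Z \<and> angle_ok k X Z Y \<and> angle_ok k Y X Z \<and>
     angle_ok k Y Z X \<and> angle_ok k Z X Y \<and> angle_ok k Z Y X"

lemma tri_ball:
  assumes "X \<noteq> Y" "X \<noteq> Z" "Y \<noteq> Z" "all_ok k X Y Z" "0 \<le> k" "k < 1"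
  defines "L \<equiv> max (norm (Y - X)) (max (norm (Z - X)) (norm (Z - Y)))"
  shows "ball ((X + Y + Z) / 3) (sqrt (1 - k\<^sup>2) * L / 6) \<subseteq> convex hull {X, Y, Z}"
proof -
  define s where "s = sqrt (1 - k\<^sup>2)"
  define \<Delta> where "\<Delta> = det2 (Y - X) (Z - X)"
  have s0: "s > 0" unfolding s_def using assms by (simp add: power_less_one_iff abs_less_iff)
  have L0: "L > 0" unfolding L_def using assms by (simp add: less_max_iff_disj)
  have e1: "\<bar>det2 (X - Y) (Z - Y)\<bar> = \<bar>\<Delta>\<bar>" unfolding \<Delta>_def by (simp add: det2_def algebra_simps)
  have e2: "\<bar>det2 (X - Z) (Y - Z)\<bar> = \<bar>\<Delta>\<bar>" unfolding \<Delta>_def by (simp add: det2_def algebra_simps)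
  have big: "s / 2 * L\<^sup>2 \<le> \<bar>\<Delta>\<bar>"
  proof -
    have "L = norm (Z - Y) \<or> L = norm (Z - X) \<or> L = norm (Y - X)" unfolding L_def by linarith
    moreover have "norm (X - Y) \<le> L" "norm (X - Z) \<le> L" "norm (Y - Z) \<le> L"
      "norm (Y - X) \<le> L" "norm (Z - X) \<le> L" "norm (Z - Y) \<le> L"
      unfolding L_def by (simp_all add: norm_minus_commute)
    ultimately show ?thesis
    proof (elim disjE)
      assume "L = norm (Z - Y)"
      thus ?thesis using long_edge[of X Y Z k] assms(4-6) \<open>norm (X - Y) \<le> L\<close> \<open>norm (X - Z) \<le> L\<close>
        unfolding all_ok_def s_def \<Delta>_def by simp
    next
      assume "L = norm (Z - X)"
      thus ?thesis using long_edge[of Y X Z k] assms(4-6) \<open>norm (Y - X) \<le> L\<close> \<open>norm (Y - Z) \<le> L\<close> e1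
        unfolding all_ok_def s_def by simp
    next
      assume "L = norm (Y - X)"
      thus ?thesis using long_edge[of Z X Y k] assms(4-6) \<open>norm (Z - X) \<le> L\<close> \<open>norm (Z - Y) \<le> L\<close> e2
        unfolding all_ok_def s_def by (simp add: norm_minus_commute)
    qed
  qed
  have "s / 2 * L\<^sup>2 > 0" using s0 L0 by simp
  hence D: "\<Delta> \<noteq> 0" using big by linarith
  have "s * L / 6 \<le> \<bar>\<Delta>\<bar> / (3 * L)"
    using big L0 by (simp add: field_simps power2_eq_square)
  hence "ball ((X + Y + Z) / 3) (s * L / 6) \<subseteq> ball ((X + Y + Z) / 3) (\<bar>\<Delta>\<bar> / (3 * L))"
    by (rule subset_ball)
  also have "\<dots> \<subseteq> convex hull {X, Y, Z}"
  proof (rule ball_in_triangle[where X=X and Y=Y and Z=Z and L=L, folded \<Delta>_def])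
    show "\<Delta> \<noteq> 0" "L > 0" by (fact D, fact L0)
    show "norm (Y - X) \<le> L" "norm (Z - X) \<le> L" "norm (Z - Y) \<le> L" unfolding L_def by simp_all
  qed
  finally show ?thesis unfolding s_def .
qed

lemma convex3_mem:
  assumes "convex S" "a \<in> S" "b \<in> S" "c \<in> S" "u \<ge> 0" "v \<ge> 0" "w \<ge> 0" "u + v + w = 1"
  shows "u *\<^sub>R a + v *\<^sub>R b + w *\<^sub>R c \<in> S"
proof -
  have "u *\<^sub>R a + v *\<^sub>R b + w *\<^sub>R c \<in> convex hull {a, b, c}"
    unfolding convex_hull_3 using assms by blast
  moreover have "convex hull {a, b, c} \<subseteq> S" using assms by (intro hull_minimal) auto
  ultimately show ?thesis by blast
qed

lemma small_ball:
  assumes "P \<noteq> Q" "P \<noteq> R" "Q \<noteq> R" "all_ok k P Q R" "0 \<le> k" "k < 1"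
    and lam: "0 \<le> lam" "lam \<le> 1/2" and rho: "0 < \<rho>" "\<rho> \<le> norm (Q - P) / 2"
  shows "\<exists>z. ball z (sqrt (1 - k\<^sup>2) * \<rho> / 6) \<subseteq> convex hull {P, Q, R} \<inter> cball (P + lam *\<^sub>R (Q - P)) \<rho>"
proof -
  define T where "T = convex hull {P, Q, R}"
  define L where "L = max (norm (Q - P)) (max (norm (R - P)) (norm (R - Q)))"
  define s where "s = sqrt (1 - k\<^sup>2)"
  define G where "G = (P + Q + R) / 3"
  define m where "m = P + lam *\<^sub>R (Q - P)"
  have TB: "ball G (s * L / 6) \<subseteq> T"
    using tri_ball[OF assms(1-6)] unfolding T_def L_def s_def G_def .
  have L0: "L > 0" unfolding L_def using assms by (simp add: less_max_iff_disj)
  have QP: "norm (Q - P) \<le> L" unfolding L_def by simp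
  define t where "t = \<rho> / L"
  have t0: "t > 0" unfolding t_def using rho L0 by simp
  have t1: "t \<le> 1/2" unfolding t_def using rho L0 QP by (simp add: divide_le_eq)
  have tL: "t * L = \<rho>" unfolding t_def using L0 by simp
  have convT: "convex T" unfolding T_def by simp
  have PT: "P \<in> T" "Q \<in> T" unfolding T_def by (simp_all add: hull_inc)
  have TcP: "T \<subseteq> cball P L"
    using L0 unfolding T_def L_def by (intro hull_minimal) (auto simp: dist_norm norm_minus_commute)
  define z where "z = m + t *\<^sub>R (G - P)"
  have "ball z (s * \<rho> / 6) \<subseteq> T \<inter> cball m \<rho>"
  proof
    fix w assume w: "w \<in> ball z (s * \<rho> / 6)"
    define x where "x = P + (1 / t) *\<^sub>R (w - m)"
    have wx: "w = m + t *\<^sub>R (x - P)" unfolding x_def using t0 by simp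
    have "x - G = (1 / t) *\<^sub>R (w - z)" unfolding x_def z_def using t0 by (simp add: algebra_simps)
    hence "norm (x - G) = norm (w - z) / t" using t0 by simp
    also have "\<dots> < (s * \<rho> / 6) / t" using w t0 by (intro divide_strict_right_mono) (simp_all add: dist_norm norm_minus_commute)
    also have "(s * \<rho> / 6) / t = s * L / 6" using tL t0 by (simp add: field_simps)
    finally have "x \<in> ball G (s * L / 6)" by (simp add: dist_norm norm_minus_commute)
    hence xT: "x \<in> T" using TB by blast
    have "w = (1 - lam - t) *\<^sub>R P + lam *\<^sub>R Q + t *\<^sub>R x"
      unfolding wx m_def by (simp add: algebra_simps)
    moreover have "(1 - lam - t) *\<^sub>R P + lam *\<^sub>R Q + t *\<^sub>R x \<in> T"
      by (rule convex3_mem[OF convT PT xT]) (use lam t0 t1 in auto)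
    ultimately have "w \<in> T" by simp
    moreover have "norm (w - m) \<le> \<rho>"
    proof -
      have "norm (x - P) \<le> L" using TcP xT by (auto simp: dist_norm norm_minus_commute)
      hence "t * norm (x - P) \<le> t * L" using t0 by simp
      thus ?thesis unfolding wx using t0 tL by simp
    qed
    ultimately show "w \<in> T \<inter> cball m \<rho>" by (simp add: dist_norm norm_minus_commute)
  qed
  thus ?thesis unfolding T_def m_def s_def by blast
qed

lemma edge_ball:
  assumes "X \<noteq> Y" "X \<noteq> Z" "Y \<noteq> Z" "all_ok k X Y Z" "0 \<le> k" "k < 1"
    and m: "m \<in> closed_segment X Y" and rho: "0 < \<rho>" "\<rho> \<le> norm (Y - X) / 2"
  shows "\<exists>z. ball z (sqrt (1 - k\<^sup>2) * \<rho> / 6) \<subseteq> convex hull {X, Y, Z} \<inter> cball m \<rho>"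
proof -
  obtain u where u: "0 \<le> u" "u \<le> 1" "m = (1 - u) *\<^sub>R X + u *\<^sub>R Y"
    using m unfolding closed_segment_def by blast
  show ?thesis
  proof (cases "u \<le> 1/2")
    case True
    have "m = X + u *\<^sub>R (Y - X)" using u by (simp add: algebra_simps)
    thus ?thesis using small_ball[OF assms(1-6) u(1) True rho] by simp
  next
    case False
    have "m = Y + (1 - u) *\<^sub>R (X - Y)" using u by (simp add: algebra_simps)
    moreover have "all_ok k Y X Z" using assms(4) unfolding all_ok_def by auto
    moreover have "convex hull {Y, X, Z} = convex hull {X, Y, Z}" by (simp add: insert_commute)
    ultimately show ?thesis
      using small_ball[of Y X Z k "1 - u" \<rho>] assms False rho u(2) by (simp add: norm_minus_commute)
  qed
qed




lemma angle_ok_from: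
  assumes "inner_angle a b c \<ge> \<epsilon>" "b \<noteq> a" "c \<noteq> a" "0 < \<epsilon>"
  shows "angle_ok (cos (min \<epsilon> 1)) a b c"
proof -
  define x where "x = ((b - a) \<bullet> (c - a)) / (norm (b - a) * norm (c - a))"
  have np: "norm (b - a) * norm (c - a) > 0" using assms by simp
  have "\<bar>(b - a) \<bullet> (c - a)\<bar> \<le> norm (b - a) * norm (c - a)" by (rule Cauchy_Schwarz_ineq2)
  hence x1: "\<bar>x\<bar> \<le> 1" unfolding x_def using np by (simp add: abs_divide divide_le_eq)
  have ax: "arccos x \<ge> min \<epsilon> 1" using assms(1) unfolding inner_angle_def x_def by linarith
  have "cos (arccos x) \<le> cos (min \<epsilon> 1)"
    using x1 ax assms(4) by (intro cos_monotone_0_pi_le) (auto intro: arccos_ubound)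
  hence "x \<le> cos (min \<epsilon> 1)" using x1 by (simp add: cos_arccos_abs)
  thus ?thesis unfolding angle_ok_def x_def using np by (simp add: divide_le_eq mult.assoc)
qed

lemma kappa_bounds:
  fixes \<epsilon> :: real
  assumes "0 < \<epsilon>" shows "0 \<le> cos (min \<epsilon> 1)" "cos (min \<epsilon> 1) < 1"
proof -
  have "min \<epsilon> 1 \<le> 1" "0 < min \<epsilon> 1" using assms by (auto simp: min_def)
  moreover have "1 < pi / 2" using pi_gt3 by linarith
  ultimately show "0 \<le> cos (min \<epsilon> 1)" by (intro cos_ge_zero) auto
  show "cos (min \<epsilon> 1) < 1"
    using \<open>0 < min \<epsilon> 1\<close> \<open>min \<epsilon> 1 \<le> 1\<close> pi_gt3
    by (intro cos_monotone_0_pi[of 0 "min \<epsilon> 1", simplified]) auto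
qed

lemma segment_norm_value:
  fixes X Y :: complex
  assumes "norm X \<le> y" "y \<le> norm Y"
  shows "\<exists>m\<in>closed_segment X Y. norm m = y"
proof -
  have "connected (norm ` closed_segment X Y)"
    by (intro connected_continuous_image continuous_intros) simp
  hence "is_interval (norm ` closed_segment X Y)" by (simp add: is_interval_connected_1)
  moreover have "norm X \<in> norm ` closed_segment X Y" "norm Y \<in> norm ` closed_segment X Y" by auto
  ultimately have "y \<in> norm ` closed_segment X Y" using assms unfolding is_interval_1 by blast
  thus ?thesis by auto
qed

definition clampn :: "real \<Rightarrow> real \<Rightarrow> complex \<Rightarrow> real" where
  "clampn r1 r2 z = max r1 (min r2 (norm z))"

lemma clampn_lip: "\<bar>clampn r1 r2 x - clampn r1 r2 y\<bar> \<le> norm (x - y)"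
proof -
  have "\<bar>clampn r1 r2 x - clampn r1 r2 y\<bar> \<le> \<bar>norm x - norm y\<bar>"
    unfolding clampn_def by (simp add: max_def min_def)
  also have "\<dots> \<le> norm (x - y)" by (rule norm_triangle_ineq3)
  finally show ?thesis .
qed

lemma clampn_range: "r1 \<le> r2 \<Longrightarrow> r1 \<le> clampn r1 r2 x \<and> clampn r1 r2 x \<le> r2"
  unfolding clampn_def by simp

lemma mid_point_exists:
  assumes "r1 \<le> r2" "clampn r1 r2 X < clampn r1 r2 Y"
  shows "\<exists>m\<in>closed_segment X Y. norm m = (clampn r1 r2 X + clampn r1 r2 Y) / 2"
proof (rule segment_norm_value)
  show "norm X \<le> (clampn r1 r2 X + clampn r1 r2 Y) / 2"
    using assms unfolding clampn_def by (simp add: max_def min_def split: if_splits)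
  show "(clampn r1 r2 X + clampn r1 r2 Y) / 2 \<le> norm Y"
    using assms unfolding clampn_def by (simp add: max_def min_def split: if_splits)
qed

lemma vertex_ball:
  assumes gh: "geodesic_homeomorphism V E F p"
    and ok: "\<forall>f\<in>F. \<forall>a\<in>f. \<forall>b\<in>f. \<forall>c\<in>f. a \<noteq> b \<and> a \<noteq> c \<and> b \<noteq> c \<longrightarrow> angle_ok k (p a) (p b) (p c)"
    and k: "0 \<le> k" "k < 1" and r: "r1 \<le> r2"
    and edge: "{v, w} \<in> E"
    and del: "\<delta> = \<bar>clampn r1 r2 (p w) - clampn r1 r2 (p v)\<bar>" "\<delta> > 0"
  shows "\<exists>f z. f \<in> F \<and> v \<in> f \<and> ball z (sqrt (1 - k\<^sup>2) * (\<delta> / 2) / 6) \<subseteq> geo_triangle p f \<and>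
            ball z (sqrt (1 - k\<^sup>2) * (\<delta> / 2) / 6) \<subseteq> {z. r1 \<le> norm z \<and> norm z \<le> r2}"
proof -
  have td: "triangulation_data V E F" and inj: "inj_on p V"
    using gh unfolding geodesic_homeomorphism_def by auto
  obtain f where f: "f \<in> F" "{v, w} \<subseteq> f" and c2: "card {v, w} = 2"
    using edge td unfolding triangulation_data_def by auto
  have vw: "v \<noteq> w" using c2 by auto
  have fV: "f \<subseteq> V" and c3: "card f = 3" using f td unfolding triangulation_data_def by auto
  have finf: "finite f" using c3 by (metis card.infinite zero_neq_numeral)
  have "\<not> f \<subseteq> {v, w}"
  proof
    assume "f \<subseteq> {v, w}"
    hence "card f \<le> card {v, w}" by (intro card_mono) auto
    thus False using c3 c2 by simp
  qed
  then obtain u where u: "u \<in> f" "u \<noteq> v" "u \<noteq> w" by blast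
  have fe: "f = {v, w, u}"
  proof -
    have "{v, w, u} \<subseteq> f" using f u by auto
    moreover have "card {v, w, u} = card f" using c3 vw u by simp
    ultimately show ?thesis using finf by (metis card_subset_eq)
  qed
  have inV: "v \<in> V" "w \<in> V" "u \<in> V" using fV fe by auto
  have pd: "p v \<noteq> p w" "p v \<noteq> p u" "p w \<noteq> p u"
    using inj inV vw u unfolding inj_on_def by metis+
  have allok: "all_ok k (p v) (p w) (p u)"
    unfolding all_ok_def using ok f(1) fe vw u by auto
  have geo: "geo_triangle p f = convex hull {p v, p w, p u}"
    unfolding geo_triangle_def fe by simp
  define a where "a = clampn r1 r2 (p v)"
  define b where "b = clampn r1 r2 (p w)"
  have ab: "r1 \<le> a" "a \<le> r2" "r1 \<le> b" "b \<le> r2" using clampn_range[OF r] unfolding a_def b_def by auto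
  obtain m where m: "m \<in> closed_segment (p v) (p w)" "norm m = (a + b) / 2"
  proof (cases "a < b")
    case True
    thus ?thesis using mid_point_exists[OF r, of "p v" "p w"] that unfolding a_def b_def by blast
  next
    case False
    hence "b < a" using del unfolding a_def b_def by auto
    thus ?thesis using mid_point_exists[OF r, of "p w" "p v"] that unfolding a_def b_def
      by (metis add.commute closed_segment_commute)
  qed
  have dab: "\<delta> = \<bar>b - a\<bar>" using del unfolding a_def b_def by simp
  have cA: "cball m (\<delta> / 2) \<subseteq> {z. r1 \<le> norm z \<and> norm z \<le> r2}"
  proof
    fix z assume "z \<in> cball m (\<delta> / 2)"
    hence "norm (z - m) \<le> \<delta> / 2" by (simp add: dist_norm norm_minus_commute)
    moreover have "\<bar>norm z - norm m\<bar> \<le> norm (z - m)" by (rule norm_triangle_ineq3)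
    ultimately have "norm z \<ge> (a + b) / 2 - \<delta> / 2" "norm z \<le> (a + b) / 2 + \<delta> / 2"
      using m(2) by linarith+
    moreover have "r1 \<le> (a + b) / 2 - \<delta> / 2" using ab dab by (cases "a \<le> b") (simp_all add: abs_if field_simps)
    moreover have "(a + b) / 2 + \<delta> / 2 \<le> r2" using ab dab by (cases "a \<le> b") (simp_all add: abs_if field_simps)
    ultimately show "z \<in> {z. r1 \<le> norm z \<and> norm z \<le> r2}" by simp
  qed
  have rho: "\<delta> / 2 \<le> norm (p w - p v) / 2"
    using clampn_lip[of r1 r2 "p w" "p v"] del by simp
  obtain z where z: "ball z (sqrt (1 - k\<^sup>2) * (\<delta> / 2) / 6) \<subseteq> convex hull {p v, p w, p u} \<inter> cball m (\<delta> / 2)"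
    using edge_ball[OF pd allok k m(1) _ rho] del(2) by auto
  show ?thesis
    using z cA f(1,2) geo by blast
qed




lemma interior_hull_small:
  fixes S :: "complex set"
  assumes "finite S" "card S \<le> 2"
  shows "interior (convex hull S) = {}"
proof -
  have "card S = 0 \<or> card S = 1 \<or> card S = 2" using assms(2) by linarith
  thus ?thesis
  proof (elim disjE)
    assume "card S = 0" thus ?thesis using assms(1) by simp
  next
    assume "card S = 1" then obtain a where "S = {a}" by (auto simp: card_Suc_eq)
    thus ?thesis by simp
  next
    assume "card S = 2" then obtain a b where "S = {a, b}" by (auto simp: card_2_iff)
    thus ?thesis by (simp add: segment_convex_hull[symmetric] interior_closed_segment_ge2)
  qed
qed

lemma interior_disjoint:
  assumes gh: "geodesic_homeomorphism V E F p" and fg: "f \<in> F" "g \<in> F" "f \<noteq> g"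
  shows "interior (geo_triangle p f) \<inter> interior (geo_triangle p g) = {}"
proof -
  have td: "triangulation_data V E F" and
    int: "geo_triangle p f \<inter> geo_triangle p g = geo_triangle p (f \<inter> g)"
    using gh fg unfolding geodesic_homeomorphism_def by auto
  have c3: "card f = 3" "card g = 3" using td fg unfolding triangulation_data_def by auto
  have fin: "finite f" using c3 by (metis card.infinite zero_neq_numeral)
  have "f \<inter> g \<noteq> f"
  proof
    assume "f \<inter> g = f"
    hence "f \<subseteq> g" by blast
    moreover have "finite g" using c3 by (metis card.infinite zero_neq_numeral)
    ultimately have "f = g" using c3 by (metis card_subset_eq)
    thus False using fg by simp
  qed
  hence "f \<inter> g \<subset> f" by blast
  hence "card (f \<inter> g) < 3" using fin c3 by (metis psubset_card_mono)
  moreover have "card (p ` (f \<inter> g)) \<le> card (f \<inter> g)" by (rule card_image_le) (use fin in simp)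
  ultimately have "card (p ` (f \<inter> g)) \<le> 2" by linarith
  hence "interior (geo_triangle p (f \<inter> g)) = {}"
    unfolding geo_triangle_def using fin by (intro interior_hull_small) auto
  thus ?thesis using int by (simp add: interior_Int[symmetric])
qed

lemma emeasure_ball_complex: "r \<ge> 0 \<Longrightarrow> emeasure lborel (ball (z::complex) r) = ennreal (pi * r\<^sup>2)"
  by (simp add: emeasure_ball unit_ball_vol_2)

lemma emeasure_annulus:
  assumes "0 < r1" "r1 < r2"
  shows "emeasure lborel {z::complex. r1 \<le> norm z \<and> norm z \<le> r2} = ennreal (pi * (r2\<^sup>2 - r1\<^sup>2))"
proof -
  have eq: "{z::complex. r1 \<le> norm z \<and> norm z \<le> r2} = cball 0 r2 - ball 0 r1" by auto
  have "emeasure lborel (cball (0::complex) r2 - ball 0 r1) = emeasure lborel (cball (0::complex) r2) - emeasure lborel (ball (0::complex) r1)"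
    using assms by (intro emeasure_Diff) (auto simp: emeasure_cball emeasure_ball)
  also have "\<dots> = ennreal (pi * r2\<^sup>2) - ennreal (pi * r1\<^sup>2)"
    using assms by (simp add: emeasure_cball emeasure_ball unit_ball_vol_2)
  also have "\<dots> = ennreal (pi * (r2\<^sup>2 - r1\<^sup>2))"
    using assms by (subst ennreal_minus) (auto simp: algebra_simps intro!: mult_left_mono power_mono)
  finally show ?thesis unfolding eq .
qed

lemma sum_measures_bound:
  assumes gh: "geodesic_homeomorphism V E F p" and W: "finite W"
    and Bs: "\<And>v. B v \<in> sets lborel" and As: "A \<in> sets lborel"
    and Bp: "\<And>v. v \<in> W \<Longrightarrow> B v = {} \<or>
       (fv v \<in> F \<and> v \<in> fv v \<and> B v \<subseteq> interior (geo_triangle p (fv v)) \<and> B v \<subseteq> A)"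
  shows "(\<Sum>v\<in>W. emeasure lborel (B v)) \<le> 3 * emeasure lborel A"
proof -
  have td: "triangulation_data V E F" using gh unfolding geodesic_homeomorphism_def by auto
  have pw: "(\<Sum>v\<in>W. indicator (B v) x) \<le> 3 * (indicator A x :: ennreal)" for x
  proof (cases "\<exists>v\<in>W. x \<in> B v")
    case False
    hence "(\<Sum>v\<in>W. indicator (B v) x :: ennreal) = 0" by (simp add: indicator_def)
    thus ?thesis by simp
  next
    case True
    then obtain v0 where v0: "v0 \<in> W" "x \<in> B v0" by blast
    have P0: "fv v0 \<in> F" "v0 \<in> fv v0" "B v0 \<subseteq> interior (geo_triangle p (fv v0))" "B v0 \<subseteq> A"
      using Bp[OF v0(1)] v0(2) by auto
    define C where "C = {v. x \<in> B v}"
    have sub: "W \<inter> C \<subseteq> fv v0"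
    proof
      fix v assume v: "v \<in> W \<inter> C"
      hence xv: "x \<in> B v" unfolding C_def by simp
      hence P: "fv v \<in> F" "v \<in> fv v" "B v \<subseteq> interior (geo_triangle p (fv v))"
        using Bp[of v] v by auto
      have "fv v = fv v0"
      proof (rule ccontr)
        assume "fv v \<noteq> fv v0"
        hence "interior (geo_triangle p (fv v)) \<inter> interior (geo_triangle p (fv v0)) = {}"
          using interior_disjoint[OF gh P(1) P0(1)] by simp
        thus False using xv v0(2) P(3) P0(3) by blast
      qed
      thus "v \<in> fv v0" using P(2) by simp
    qed
    have c3: "card (fv v0) = 3" using td P0(1) unfolding triangulation_data_def by auto
    have fin: "finite (fv v0)" using c3 by (metis card.infinite zero_neq_numeral)
    have "card (W \<inter> C) \<le> 3" using card_mono[OF fin sub] c3 by simp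
    have "(\<Sum>v\<in>W. indicator (B v) x :: ennreal) = (\<Sum>v\<in>W. if v \<in> C then 1 else 0)"
      by (intro sum.cong) (auto simp: C_def indicator_def)
    also have "\<dots> = (\<Sum>v\<in>W \<inter> C. 1)" by (rule sum.inter_restrict[OF W, symmetric])
    also have "\<dots> = of_nat (card (W \<inter> C))" by simp
    also have "\<dots> \<le> 3" using \<open>card (W \<inter> C) \<le> 3\<close> by (simp add: of_nat_le_iff[of _ 3, symmetric])
    also have "\<dots> = 3 * indicator A x" using P0(4) v0(2) by auto
    finally show ?thesis .
  qed
  have "(\<Sum>v\<in>W. emeasure lborel (B v)) = (\<Sum>v\<in>W. \<integral>\<^sup>+ x. indicator (B v) x \<partial>lborel)"
    using Bs by simp
  also have "\<dots> = (\<integral>\<^sup>+ x. (\<Sum>v\<in>W. indicator (B v) x) \<partial>lborel)"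
    using Bs by (intro nn_integral_sum[symmetric]) simp
  also have "\<dots> \<le> (\<integral>\<^sup>+ x. 3 * indicator A x \<partial>lborel)"
    by (intro nn_integral_mono pw)
  also have "\<dots> = 3 * emeasure lborel A" using As by (rule nn_integral_cmult_indicator)
  finally show ?thesis .
qed




lemma inv_bound:
  fixes x :: ennreal
  assumes "x \<le> ennreal B" "0 < B"
  shows "ennreal (1/B) \<le> 1 / x"
proof (cases "x = 0")
  case True thus ?thesis by simp
next
  case False
  obtain y where y: "x = ennreal y" "0 \<le> y" using assms(1) by (cases x) (auto simp: top_unique)
  have "y \<le> B" using assms y by simp
  have "y > 0" using False y by auto
  hence "1 / x = ennreal (1 / y)" using y by (simp add: divide_ennreal[symmetric])
  moreover have "1 / B \<le> 1 / y" using \<open>y > 0\<close> \<open>y \<le> B\<close> by (simp add: frac_le)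
  ultimately show ?thesis by (simp add: ennreal_leI)
qed

lemma arith_aux: "d > 0 \<Longrightarrow> s > 0 \<Longrightarrow> (576::real) / (pi * s\<^sup>2 * d\<^sup>2) * (3 * (pi * (a * d))) = 1728 * a / (s\<^sup>2 * d)"
  by (simp add: field_simps power2_eq_square)

lemma vmod_bound:
  assumes gh: "geodesic_homeomorphism V E F p"
    and ok: "\<forall>f\<in>F. \<forall>a\<in>f. \<forall>b\<in>f. \<forall>c\<in>f. a \<noteq> b \<and> a \<noteq> c \<and> b \<noteq> c \<longrightarrow> angle_ok k (p a) (p b) (p c)"
    and k: "0 \<le> k" "k < 1" and r: "0 < r1" "r1 < r2"
    and V1: "p ` V1 \<subseteq> ball 0 r1" and V2: "p ` V2 \<subseteq> - ball 0 r2"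
  shows "vmod V E V1 V2 \<le> ennreal (1728 * (r2 + r1) / ((1 - k\<^sup>2) * (r2 - r1)))"
proof -
  define g where "g = (\<lambda>v. clampn r1 r2 (p v))"
  define N where "N = (\<lambda>v. {\<bar>g w - g v\<bar> | w. {v, w} \<in> E})"
  define \<sigma> where "\<sigma> = (\<lambda>v. Sup (insert 0 (N v)))"
  define \<eta> where "\<eta> = (\<lambda>v. \<sigma> v / (r2 - r1))"
  have d0: "r2 - r1 > 0" using r by simp
  have grange: "r1 \<le> g v \<and> g v \<le> r2" for v unfolding g_def using clampn_range r by simp
  have bdd: "bdd_above (insert 0 (N v))" for v
  proof -
    have gw: "\<bar>g w - g v\<bar> \<le> r2 - r1" for w using grange[of w] grange[of v] by (auto simp: abs_le_iff)
    have "\<forall>x\<in>insert 0 (N v). x \<le> r2 - r1"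
      unfolding N_def using gw d0 by auto
    thus ?thesis unfolding bdd_above_def by blast
  qed
  have s0: "\<sigma> v \<ge> 0" for v unfolding \<sigma>_def using bdd by (intro cSup_upper) auto
  have sup: "\<bar>g w - g v\<bar> \<le> \<sigma> v" if "{v, w} \<in> E" for v w
    unfolding \<sigma>_def using bdd that by (intro cSup_upper) (auto simp: N_def)
  have adm: "admissible V E V1 V2 \<eta>"
    unfolding admissible_def
  proof (intro conjI ballI)
    fix v show "\<eta> v \<ge> 0" unfolding \<eta>_def using s0 d0 by simp
  next
    fix \<gamma> assume "\<gamma> \<in> graph_paths E V1 V2"
    hence \<gamma>: "\<gamma> \<noteq> []" "hd \<gamma> \<in> V1" "last \<gamma> \<in> V2"
      "\<forall>k. Suc k < length \<gamma> \<longrightarrow> {\<gamma> ! k, \<gamma> ! Suc k} \<in> E"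
      unfolding graph_paths_def by auto
    have succ: "successively (\<lambda>x y. {x, y} \<in> E) \<gamma>"
      using \<gamma>(4) by (simp add: successively_conv_nth)
    have tel: "g (last \<gamma>) / (r2 - r1) - g (hd \<gamma>) / (r2 - r1) \<le> (\<Sum>v\<in>set \<gamma>. \<eta> v)"
    proof (rule chain_telescope[OF _ _ succ \<gamma>(1), where h = "\<lambda>v. g v / (r2 - r1)"])
      fix x y assume "{x, y} \<in> E"
      hence "g y - g x \<le> \<sigma> x" using sup[of x y] by simp
      thus "g y / (r2 - r1) - g x / (r2 - r1) \<le> \<eta> x" unfolding \<eta>_def using d0
        by (simp add: diff_divide_distrib[symmetric] divide_right_mono)
    next
      fix x show "0 \<le> \<eta> x" unfolding \<eta>_def using s0 d0 by simp
    qed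
    have "norm (p (hd \<gamma>)) < r1" using V1 \<gamma>(2) by auto
    hence "g (hd \<gamma>) = r1" unfolding g_def clampn_def using r by simp
    moreover have "norm (p (last \<gamma>)) \<ge> r2" using V2 \<gamma>(3) by force
    hence "g (last \<gamma>) = r2" unfolding g_def clampn_def using r by simp
    ultimately show "1 \<le> (\<Sum>v\<in>set \<gamma>. \<eta> v)" using tel d0 by (simp add: diff_divide_distrib[symmetric])
  qed
  define s where "s = sqrt (1 - k\<^sup>2)"
  have s2: "s\<^sup>2 = 1 - k\<^sup>2" unfolding s_def using k by (simp add: power_le_one)
  have spos: "s > 0" unfolding s_def using k by (simp add: power_less_one_iff abs_less_iff)
  define A where "A = {z::complex. r1 \<le> norm z \<and> norm z \<le> r2}"
  have ex: "\<exists>f z rr. 0 < \<sigma> v \<longrightarrow> (f \<in> F \<and> v \<in> f \<and> ball z rr \<subseteq> interior (geo_triangle p f) \<and>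
              ball z rr \<subseteq> A \<and> s * \<sigma> v / 24 \<le> rr)" for v
  proof (cases "0 < \<sigma> v")
    case False thus ?thesis by blast
  next
    case True
    have "\<sigma> v / 2 < Sup (insert 0 (N v))" using True unfolding \<sigma>_def by simp
    then obtain x where x: "x \<in> insert 0 (N v)" "\<sigma> v / 2 < x" by (rule less_cSupE) auto
    hence "x \<noteq> 0" using True by auto
    with x obtain w where w: "{v, w} \<in> E" "x = \<bar>g w - g v\<bar>" unfolding N_def by auto
    define \<delta> where "\<delta> = \<bar>clampn r1 r2 (p w) - clampn r1 r2 (p v)\<bar>"
    have dx: "\<delta> = x" unfolding \<delta>_def w(2) g_def ..
    have "\<delta> > 0" using dx x True by linarith
    from vertex_ball[OF gh ok k _ w(1) \<delta>_def this] r
    obtain f z where fz: "f \<in> F" "v \<in> f" "ball z (s * (\<delta> / 2) / 6) \<subseteq> geo_triangle p f"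
        "ball z (s * (\<delta> / 2) / 6) \<subseteq> A" unfolding s_def A_def by auto
    have "ball z (s * (\<delta> / 2) / 6) \<subseteq> interior (geo_triangle p f)"
      using fz(3) by (intro interior_maximal) auto
    moreover have "s * \<sigma> v / 24 \<le> s * (\<delta> / 2) / 6" using dx x spos by simp
    ultimately show ?thesis using fz by blast
  qed
  then obtain fv zv rv where fzr: "\<And>v. 0 < \<sigma> v \<Longrightarrow> fv v \<in> F \<and> v \<in> fv v \<and>
      ball (zv v) (rv v) \<subseteq> interior (geo_triangle p (fv v)) \<and> ball (zv v) (rv v) \<subseteq> A \<and> s * \<sigma> v / 24 \<le> rv v"
    by metis
  define B where "B = (\<lambda>v. if 0 < \<sigma> v then ball (zv v) (rv v) else {})"
  define c where "c = 576 / (pi * s\<^sup>2 * (r2 - r1)\<^sup>2)"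
  have cpos: "c > 0" unfolding c_def using spos d0 by simp
  have each: "ennreal ((\<eta> v)\<^sup>2) \<le> ennreal c * emeasure lborel (B v)" for v
  proof (cases "0 < \<sigma> v")
    case False
    hence "\<eta> v = 0" unfolding \<eta>_def using s0[of v] by simp
    thus ?thesis by simp
  next
    case True
    have rv: "s * \<sigma> v / 24 \<le> rv v" using fzr[OF True] by simp
    have rv0: "0 \<le> rv v" using rv spos True by (smt (verit) divide_nonneg_nonneg mult_nonneg_nonneg)
    have "(s * \<sigma> v / 24)\<^sup>2 \<le> (rv v)\<^sup>2" using rv spos True by (intro power_mono) auto
    hence "s\<^sup>2 * (\<sigma> v)\<^sup>2 \<le> 576 * (rv v)\<^sup>2" by (simp add: power_mult_distrib power_divide)
    hence "(\<sigma> v)\<^sup>2 \<le> 576 * (rv v)\<^sup>2 / s\<^sup>2" using spos by (simp add: pos_le_divide_eq mult.commute)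
    hence "(\<sigma> v)\<^sup>2 / (r2 - r1)\<^sup>2 \<le> (576 * (rv v)\<^sup>2 / s\<^sup>2) / (r2 - r1)\<^sup>2"
      by (intro divide_right_mono) auto
    moreover have "c * (pi * (rv v)\<^sup>2) = (576 * (rv v)\<^sup>2 / s\<^sup>2) / (r2 - r1)\<^sup>2"
      unfolding c_def by (simp add: field_simps)
    ultimately have "(\<eta> v)\<^sup>2 \<le> c * (pi * (rv v)\<^sup>2)"
      unfolding \<eta>_def by (simp add: power_divide)
    hence "ennreal ((\<eta> v)\<^sup>2) \<le> ennreal (c * (pi * (rv v)\<^sup>2))" by (rule ennreal_leI)
    also have "\<dots> = ennreal c * emeasure lborel (B v)"
      unfolding B_def using True rv0 cpos by (simp add: emeasure_ball_complex ennreal_mult)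
    finally show ?thesis .
  qed
  have Bs: "B v \<in> sets lborel" for v unfolding B_def by simp
  have As: "A \<in> sets lborel"
  proof -
    have "closed A" unfolding A_def by (intro closed_Collect_conj closed_Collect_le continuous_intros)
    thus ?thesis by simp
  qed
  have Bp: "B v = {} \<or> (fv v \<in> F \<and> v \<in> fv v \<and> B v \<subseteq> interior (geo_triangle p (fv v)) \<and> B v \<subseteq> A)" for v
    unfolding B_def using fzr[of v] by auto
  define Bnd where "Bnd = 1728 * (r2 + r1) / ((1 - k\<^sup>2) * (r2 - r1))"
  have fin: "(\<Sum>v\<in>W. ennreal ((\<eta> v)\<^sup>2)) \<le> ennreal Bnd" if W: "finite W" "W \<subseteq> V" for W
  proof -
    have "(\<Sum>v\<in>W. ennreal ((\<eta> v)\<^sup>2)) \<le> (\<Sum>v\<in>W. ennreal c * emeasure lborel (B v))"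
      by (intro sum_mono each)
    also have "\<dots> = ennreal c * (\<Sum>v\<in>W. emeasure lborel (B v))" by (simp add: sum_distrib_left)
    also have "\<dots> \<le> ennreal c * (3 * emeasure lborel A)"
      by (intro mult_left_mono sum_measures_bound[OF gh W(1) Bs As Bp]) auto
    also have "\<dots> = ennreal (c * (3 * (pi * (r2\<^sup>2 - r1\<^sup>2))))"
      unfolding A_def using r cpos by (simp add: emeasure_annulus ennreal_mult)
    also have "c * (3 * (pi * (r2\<^sup>2 - r1\<^sup>2))) = Bnd"
    proof -
      have e: "r2\<^sup>2 - r1\<^sup>2 = (r2 + r1) * (r2 - r1)" by (simp add: power2_eq_square algebra_simps)
      have "c * (3 * (pi * (r2\<^sup>2 - r1\<^sup>2))) = 1728 * (r2 + r1) / (s\<^sup>2 * (r2 - r1))"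
        unfolding c_def e using d0 spos by (rule arith_aux)
      thus ?thesis unfolding Bnd_def s2 .
    qed
    finally show ?thesis .
  qed
  have "vmod V E V1 V2 \<le> (\<Sum>\<^sub>\<infinity> v\<in>V. ennreal ((\<eta> v)\<^sup>2))"
    unfolding vmod_def using adm by (intro INF_lower) simp
  also have "\<dots> = (SUP W\<in>{W. finite W \<and> W \<subseteq> V}. \<Sum>v\<in>W. ennreal ((\<eta> v)\<^sup>2))"
    by (rule nonneg_infsum_complete) simp
  also have "\<dots> \<le> ennreal Bnd" by (intro SUP_least) (use fin in auto)
  finally show ?thesis unfolding Bnd_def .
qed



lemma fin_arith:
  fixes a r1 r2 :: real
  assumes "a > 0" "0 < r1" "r1 < r2"
  shows "a / 6912 * (1 - (r1 / r2)\<^sup>2) \<le> 1 / (1728 * (r2 + r1) / (a * (r2 - r1)))"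
proof -
  define d where "d = r2 - r1"
  have d: "d > 0" using assms unfolding d_def by simp
  have r2: "r2 = r1 + d" unfolding d_def by simp
  have q: "(r2 + r1)\<^sup>2 \<le> (2 * r2)\<^sup>2" using assms by (intro power_mono) auto
  have "1 - (r1 / r2)\<^sup>2 = (r2 + r1) * d / r2\<^sup>2"
    using assms unfolding d_def by (simp add: field_simps power2_eq_square)
  hence L: "a / 6912 * (1 - (r1 / r2)\<^sup>2) = (a * d / 1728) * ((r2 + r1) / (4 * r2\<^sup>2))"
    by simp
  have R: "1 / (1728 * (r2 + r1) / (a * (r2 - r1))) = (a * d / 1728) * (1 / (r2 + r1))"
    unfolding d_def[symmetric] by simp
  have "(r2 + r1) / (4 * r2\<^sup>2) \<le> 1 / (r2 + r1)"
  proof -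
    have p: "r2 + r1 > 0" "r2\<^sup>2 > 0" using assms by auto
    have e: "(r2 + r1) / (4 * r2\<^sup>2) - 1 / (r2 + r1) = ((r2 + r1)\<^sup>2 - (2 * r2)\<^sup>2) / (4 * r2\<^sup>2 * (r2 + r1))"
      using assms by (simp add: field_simps power2_eq_square)
    have "((r2 + r1)\<^sup>2 - (2 * r2)\<^sup>2) / (4 * r2\<^sup>2 * (r2 + r1)) \<le> 0"
      using q p by (intro divide_nonpos_pos) auto
    thus ?thesis using e by linarith
  qed
  thus ?thesis unfolding L R using d assms by (intro mult_left_mono) auto
qed

theorem lemma3p4:
  fixes \<epsilon> :: real
  assumes "\<epsilon> > 0"
  shows "\<exists>C>0. \<forall>V E F p r1 r2 V1 V2.
     geodesic_homeomorphism V E F p \<and> uniformly_nondegenerate F p \<epsilon> \<and>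
     0 < r1 \<and> r1 < r2 \<and>
     V1 \<subseteq> V \<and> V2 \<subseteq> V \<and> V1 \<noteq> {} \<and> V2 \<noteq> {} \<and> V1 \<inter> V2 = {} \<and>
     p ` V1 \<subseteq> ball 0 r1 \<and> p ` V2 \<subseteq> - ball 0 r2 \<and>
     (\<forall>i\<in>V1. star_image F p i \<subseteq> ball 0 r2)
     \<longrightarrow> VEL V E V1 V2 \<ge> ennreal (C * (1 - (r1 / r2)\<^sup>2)) \<and>
         (r2 \<ge> 2 * r1 \<longrightarrow> VEL V E V1 V2 \<ge> ennreal (3 / 4 * C))"
proof -
  define \<kappa> where "\<kappa> = cos (min \<epsilon> 1)"
  have k: "0 \<le> \<kappa>" "\<kappa> < 1" using kappa_bounds[OF assms] by (simp_all add: \<kappa>_def)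
  have a0: "1 - \<kappa>\<^sup>2 > 0"
  proof -
    have "\<kappa>\<^sup>2 < 1" using k by (simp add: power_less_one_iff abs_less_iff)
    thus ?thesis by simp
  qed
  define C where "C = (1 - \<kappa>\<^sup>2) / 6912"
  have Cpos: "C > 0" unfolding C_def using a0 by simp
  have main: "VEL V E V1 V2 \<ge> ennreal (C * (1 - (r1 / r2)\<^sup>2)) \<and>
         (r2 \<ge> 2 * r1 \<longrightarrow> VEL V E V1 V2 \<ge> ennreal (3 / 4 * C))"
    if H: "geodesic_homeomorphism V E F p" "uniformly_nondegenerate F p \<epsilon>"
      "0 < r1" "r1 < r2" "p ` V1 \<subseteq> ball 0 r1" "p ` V2 \<subseteq> - ball 0 r2"
    for V E F p r1 r2 V1 V2
  proof -
    have td: "triangulation_data V E F" and inj: "inj_on p V"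
      using H(1) unfolding geodesic_homeomorphism_def by auto
    have ok: "\<forall>f\<in>F. \<forall>a\<in>f. \<forall>b\<in>f. \<forall>c\<in>f. a \<noteq> b \<and> a \<noteq> c \<and> b \<noteq> c \<longrightarrow> angle_ok \<kappa> (p a) (p b) (p c)"
    proof (intro ballI impI)
      fix f a b c assume f: "f \<in> F" "a \<in> f" "b \<in> f" "c \<in> f" and d: "a \<noteq> b \<and> a \<noteq> c \<and> b \<noteq> c"
      have fV: "f \<subseteq> V" using td f(1) unfolding triangulation_data_def by auto
      have "inner_angle (p a) (p b) (p c) \<ge> \<epsilon>"
        using H(2) f d unfolding uniformly_nondegenerate_def by blast
      moreover have "p b \<noteq> p a" "p c \<noteq> p a"
        using inj fV f d unfolding inj_on_def by blast+
      ultimately show "angle_ok \<kappa> (p a) (p b) (p c)"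
        unfolding \<kappa>_def by (rule angle_ok_from) (use assms in auto)
    qed
    define Bnd where "Bnd = 1728 * (r2 + r1) / ((1 - \<kappa>\<^sup>2) * (r2 - r1))"
    have Bpos: "Bnd > 0" unfolding Bnd_def using a0 H(3,4) by simp
    have vm: "vmod V E V1 V2 \<le> ennreal Bnd"
      unfolding Bnd_def using vmod_bound[OF H(1) ok k H(3,4,5,6)] .
    have V: "ennreal (1 / Bnd) \<le> VEL V E V1 V2"
      unfolding VEL_def by (rule inv_bound[OF vm Bpos])
    have "C * (1 - (r1 / r2)\<^sup>2) \<le> 1 / Bnd"
      unfolding C_def Bnd_def
      using fin_arith[OF a0 H(3,4)] by (simp add: mult.assoc)
    hence first: "ennreal (C * (1 - (r1 / r2)\<^sup>2)) \<le> VEL V E V1 V2"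
      using V by (meson ennreal_leI order_trans)
    have second: "ennreal (3 / 4 * C) \<le> VEL V E V1 V2" if "r2 \<ge> 2 * r1"
    proof -
      have "r1 / r2 \<le> 1 / 2" using that H(3,4) by (simp add: divide_le_eq)
      moreover have "0 \<le> r1 / r2" using H(3,4) by simp
      ultimately have "(r1 / r2)\<^sup>2 \<le> (1 / 2)\<^sup>2" by (intro power_mono) auto
      hence "3 / 4 * C \<le> C * (1 - (r1 / r2)\<^sup>2)" using Cpos by (simp add: power2_eq_square)
      hence "ennreal (3 / 4 * C) \<le> ennreal (C * (1 - (r1 / r2)\<^sup>2))" by (rule ennreal_leI)
      thus ?thesis using first by simp
    qed
    show ?thesis using first second by simp
  qed
  show ?thesis
    apply (rule exI[of _ C], rule conjI[OF Cpos], intro allI impI, elim conjE)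
    apply (rule main)
         apply assumption+
    done
qed

end
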